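(* (i) For integers $p\geq 0$, $s,t\geq 1$ and $\max\{s+p+2,\,t+p+2\}\leq n\leq s+t+p+1$, the graph $M_{n,n-1}^{s,t}$ is not $2p$-Hamilton-biconnected. (ii) For integers $p\geq 0$, $s,t\geq 1$ and $n=s+t+p$, the graph $M_{n,n}^{s,t}$ is not $2p$-Hamilton-biconnected. (iii) For integers $p\geq 0$ and $n\geq p+6$, the graph $N_{n,n}^{p,1}$ is not $2p$-Hamilton-biconnected.
   Context: For a bipartite graph $G=(X,Y;E)$: if $|X|=|Y|$ (balanced), $G$ is Hamilton-biconnected if for every $u\in X$, $v\in Y$ there is a Hamiltonian path with ends $u,v$; if $|X|=|Y|+1$ (nearly balanced), $G$ is Hamilton-biconnected if for any two distinct $u,v\in X$ there is a Hamiltonian path with ends $u,v$. A vertex set $W$ is balanced if $|W\cap X|=|W\cap Y|$; $G$ is $2p$-Hamilton-biconnected if for every balanced $W$ with $|W|=2p$, the subgraph induced by $V(G)\setminus W$ is Hamilton-biconnected. $M_{n,m}^{s,t}$: parts $X=X_1\cup X_2$ (with $n$ vertices), $Y=Y_1\cup Y_2$ (with $m$ vertices), $|X_1|=s$, $|X_2|=n-s$, $|Y_1|=m-t$, $|Y_2|=t$; edges are all pairs between $X_1$ and $Y_1$, between $X_2$ and $Y_1$, and between $X_2$ and $Y_2$. $N_{n,n}^{p,1}$: parts $X=X_1\cup X_2\cup X_3$, $Y=Y_1\cup Y_2\cup Y_3$, $|X_1|=|Y_1|=n-p-2$, $|X_2|=|Y_2|=p+1$, $|X_3|=|Y_3|=1$;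 edges are all pairs between $X_i$ and $Y_i$ ($i=1,2,3$), between $X_1$ and $Y_2$, between $X_2$ and $Y_1\cup Y_3$, and between $X_3$ and $Y_2$. *)

theory Defs
  imports Main
begin

text \<open>Subgraphs induced on a vertex set are represented by restricting the
vertex set (a path only uses vertices of that set).\<close>

definition ham_path :: "'a set \<Rightarrow> ('a \<Rightarrow> 'a \<Rightarrow> bool) \<Rightarrow> 'a \<Rightarrow> 'a \<Rightarrow> bool" where
  "ham_path V E u v \<longleftrightarrow>
     (\<exists>ps. ps \<noteq> [] \<and> distinct ps \<and> set ps = V \<and> hd ps = u \<and> last ps = v \<and>
           (\<forall>i. Suc i < length ps \<longrightarrow> E (ps ! i) (ps ! Suc i)))"

definition hamilton_biconnected :: "'a set \<Rightarrow> 'a set \<Rightarrow> ('a \<Rightarrow> 'a \<Rightarrow> bool) \<Rightarrow> bool" where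
  "hamilton_biconnected X Y E \<longleftrightarrow>
     (card X = card Y \<and> (\<forall>u\<in>X. \<forall>v\<in>Y. ham_path (X \<union> Y) E u v)) \<or>
     (card X = card Y + 1 \<and> (\<forall>u\<in>X. \<forall>v\<in>X. u \<noteq> v \<longrightarrow> ham_path (X \<union> Y) E u v))"

definition balanced_set :: "'a set \<Rightarrow> 'a set \<Rightarrow> 'a set \<Rightarrow> bool" where
  "balanced_set X Y W \<longleftrightarrow> card (W \<inter> X) = card (W \<inter> Y)"

definition hamilton_biconnected_2p :: "nat \<Rightarrow> 'a set \<Rightarrow> 'a set \<Rightarrow> ('a \<Rightarrow> 'a \<Rightarrow> bool) \<Rightarrow> bool" where
  "hamilton_biconnected_2p p X Y E \<longleftrightarrow>
     (\<forall>W. W \<subseteq> X \<union> Y \<and> balanced_set X Y W \<and> card W = 2 * p \<longrightarrow>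
          hamilton_biconnected (X - W) (Y - W) E)"

text \<open>Vertices are pairs (class, index).
 M_{n,m}^{s,t}: X1 = class 0 (s vertices), X2 = class 1 (n-s), Y1 = class 2 (m-t),
 Y2 = class 3 (t).\<close>

definition M_X :: "nat \<Rightarrow> nat \<Rightarrow> (nat \<times> nat) set" where
  "M_X n s = {(0, k) | k. k < s} \<union> {(1, k) | k. k < n - s}"

definition M_Y :: "nat \<Rightarrow> nat \<Rightarrow> (nat \<times> nat) set" where
  "M_Y m t = {(2, k) | k. k < m - t} \<union> {(3, k) | k. k < t}"

definition M_E :: "nat \<times> nat \<Rightarrow> nat \<times> nat \<Rightarrow> bool" where
  "M_E a b \<longleftrightarrow> {fst a, fst b} \<in> {{0, 2}, {1, 2}, {1, 3}}"

text \<open>N_{n,n}^{p,1}: X1,X2,X3 = classes 0,1,2 with sizes n-p-2, p+1, 1;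
 Y1,Y2,Y3 = classes 3,4,5 with the same sizes.\<close>

definition N_X :: "nat \<Rightarrow> nat \<Rightarrow> (nat \<times> nat) set" where
  "N_X n p = {(0, k) | k. k < n - p - 2} \<union> {(1, k) | k. k < p + 1} \<union> {(2, 0)}"

definition N_Y :: "nat \<Rightarrow> nat \<Rightarrow> (nat \<times> nat) set" where
  "N_Y n p = {(3, k) | k. k < n - p - 2} \<union> {(4, k) | k. k < p + 1} \<union> {(5, 0)}"

definition N_E :: "nat \<times> nat \<Rightarrow> nat \<times> nat \<Rightarrow> bool" where
  "N_E a b \<longleftrightarrow> {fst a, fst b} \<in>
     {{0, 3}, {1, 4}, {2, 5}, {0, 4}, {1, 3}, {1, 5}, {2, 4}}"

end

theory Submission
  imports Defs
begin



lemma cnt_A: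
  assumes "ps \<noteq> []" "\<forall>k. Suc k < length ps \<longrightarrow> \<not> (ps!k \<in> I \<and> ps!Suc k \<in> I)" "last ps \<notin> I"
  shows "2 * length (filter (\<lambda>x. x \<in> I) ps) + (if hd ps \<in> I then 0 else 1) \<le> length ps"
  using assms
proof (induction ps)
  case Nil then show ?case by simp
next
  case (Cons x ps)
  show ?case
  proof (cases "ps = []")
    case True then show ?thesis using Cons.prems by simp
  next
    case False
    have h: "\<forall>k. Suc k < length ps \<longrightarrow> \<not> (ps!k \<in> I \<and> ps!Suc k \<in> I)"
      using Cons.prems(2) by (metis Suc_less_eq length_Cons nth_Cons_Suc)
    have l: "last ps \<notin> I" using Cons.prems(3) False by simp
    have IH: "2 * length (filter (\<lambda>x. x \<in> I) ps) + (if hd ps \<in> I then 0 else 1) \<le> length ps"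
      using Cons.IH[OF False h l] .
    have "\<not> (x \<in> I \<and> hd ps \<in> I)" using Cons.prems(2)[rule_format, of 0] False
      by (simp add: hd_conv_nth)
    then show ?thesis using IH by (auto split: if_splits)
  qed
qed

lemma cnt_B:
  assumes "ps \<noteq> []" "\<forall>k. Suc k < length ps \<longrightarrow> \<not> (ps!k \<in> I \<and> ps!Suc k \<in> I)" "last ps \<notin> I"
    "\<exists>k. Suc k < length ps \<and> ps!k \<notin> I \<and> ps!Suc k \<notin> I"
  shows "2 * length (filter (\<lambda>x. x \<in> I) ps) + (if hd ps \<in> I then 0 else 1) + 1 \<le> length ps"
  using assms
proof (induction ps)
  case Nil then show ?case by simp
next
  case (Cons x ps)
  have F: "ps \<noteq> []" using Cons.prems(4) by auto
  have h: "\<forall>k. Suc k < length ps \<longrightarrow> \<not> (ps!k \<in> I \<and> ps!Suc k \<in> I)"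
    using Cons.prems(2) by (metis Suc_less_eq length_Cons nth_Cons_Suc)
  have l: "last ps \<notin> I" using Cons.prems(3) F by simp
  have A: "2 * length (filter (\<lambda>x. x \<in> I) ps) + (if hd ps \<in> I then 0 else 1) \<le> length ps"
    using cnt_A[OF F h l] .
  have nb: "\<not> (x \<in> I \<and> hd ps \<in> I)" using Cons.prems(2)[rule_format, of 0] F
    by (simp add: hd_conv_nth)
  obtain k where k: "Suc k < length (x#ps)" "(x#ps)!k \<notin> I" "(x#ps)!Suc k \<notin> I"
    using Cons.prems(4) by blast
  show ?case
  proof (cases k)
    case 0
    then have "x \<notin> I" "hd ps \<notin> I" using k F by (auto simp: hd_conv_nth)
    then show ?thesis using A by simp
  next
    case (Suc k')
    then have "\<exists>k. Suc k < length ps \<and> ps!k \<notin> I \<and> ps!Suc k \<notin> I" using k by auto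
    then have IH: "2 * length (filter (\<lambda>x. x \<in> I) ps) + (if hd ps \<in> I then 0 else 1) + 1 \<le> length ps"
      using Cons.IH[OF F h l] by blast
    then show ?thesis using nb by (auto split: if_splits)
  qed
qed

lemma alt:
  assumes "\<forall>k. Suc k < length ps \<longrightarrow> (P (ps!k) \<longleftrightarrow> \<not> P (ps!Suc k))" "j < length ps"
  shows "P (ps!j) \<longleftrightarrow> (P (ps!0) \<longleftrightarrow> even j)"
  using assms(2)
proof (induction j)
  case 0 then show ?case by simp
next
  case (Suc j)
  then show ?case using assms(1)[rule_format, of j] by auto
qed

lemma card_filter_distinct:
  "distinct ps \<Longrightarrow> length (filter (\<lambda>x. x \<in> I) ps) = card (I \<inter> set ps)"
  by (metis distinct_card distinct_filter set_filter Int_commute Collect_conj_eq Collect_mem_eq inf_set_def)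



lemma M_E_iff: "M_E a b \<longleftrightarrow> (fst a = 0 \<and> fst b = 2) \<or> (fst a = 2 \<and> fst b = 0) \<or>
   (fst a = 1 \<and> fst b = 2) \<or> (fst a = 2 \<and> fst b = 1) \<or> (fst a = 1 \<and> fst b = 3) \<or> (fst a = 3 \<and> fst b = 1)"
  unfolding M_E_def by (auto simp: doubleton_eq_iff)

lemma card_pair2:
  assumes "a \<noteq> b" "finite A" "finite B"
  shows "card (Pair a ` A \<union> Pair b ` B) = card A + card B"
proof -
  have "card (Pair a ` A \<union> Pair b ` B) = card (Pair a ` A) + card (Pair b ` B)"
    by (rule card_Un_disjoint) (use assms in auto)
  also have "\<dots> = card A + card B" by (simp add: card_image inj_on_def)
  finally show ?thesis .
qed

lemma partII:
  assumes "1 \<le> s" "1 \<le> t" "n = s + t + p"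
  shows "\<not> hamilton_biconnected_2p p (M_X n s) (M_Y n t) M_E"
proof
  assume H: "hamilton_biconnected_2p p (M_X n s) (M_Y n t) M_E"
  define W where "W = Pair (1::nat) ` {..<p} \<union> Pair (2::nat) ` {..<p}"
  have WX: "W \<inter> M_X n s = Pair 1 ` {..<p}" using assms by (auto simp: W_def M_X_def image_iff)
  have WY: "W \<inter> M_Y n t = Pair 2 ` {..<p}" using assms by (auto simp: W_def M_Y_def image_iff)
  have "W \<subseteq> M_X n s \<union> M_Y n t" using assms by (auto simp: W_def M_X_def M_Y_def)
  moreover have "balanced_set (M_X n s) (M_Y n t) W"
    unfolding balanced_set_def WX WY by (simp add: card_image inj_on_def)
  moreover have "card W = 2 * p" unfolding W_def by (subst card_pair2) auto
  ultimately have HB: "hamilton_biconnected (M_X n s - W) (M_Y n t - W) M_E"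
    using H unfolding hamilton_biconnected_2p_def by blast
  have X': "M_X n s - W = Pair 0 ` {..<s} \<union> Pair 1 ` {p..<t+p}"
    using assms by (auto simp: W_def M_X_def image_iff)
  have Y': "M_Y n t - W = Pair 2 ` {p..<s+p} \<union> Pair 3 ` {..<t}"
    using assms by (auto simp: W_def M_Y_def image_iff)
  have cX: "card (M_X n s - W) = s + t" unfolding X' by (subst card_pair2) auto
  have cY: "card (M_Y n t - W) = s + t" unfolding Y' by (subst card_pair2) auto
  have u: "(1, p) \<in> M_X n s - W" unfolding X' using assms by auto
  have v: "(2, p) \<in> M_Y n t - W" unfolding Y' using assms by auto
  have "ham_path ((M_X n s - W) \<union> (M_Y n t - W)) M_E (1,p) (2,p)"
    using HB u v cX cY unfolding hamilton_biconnected_def by auto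
  then obtain ps where ps: "ps \<noteq> []" "distinct ps" "set ps = (M_X n s - W) \<union> (M_Y n t - W)"
    "hd ps = (1,p)" "last ps = (2,p)" "\<forall>i. Suc i < length ps \<longrightarrow> M_E (ps ! i) (ps ! Suc i)"
    unfolding ham_path_def by blast
  define I where "I = {a::nat\<times>nat. fst a = 0 \<or> fst a = 3}"
  have nc: "\<forall>k. Suc k < length ps \<longrightarrow> \<not> (ps!k \<in> I \<and> ps!Suc k \<in> I)"
    using ps(6) by (auto simp: I_def M_E_iff)
  have A: "2 * length (filter (\<lambda>x. x \<in> I) ps) + (if hd ps \<in> I then 0 else 1) \<le> length ps"
    by (rule cnt_A[OF ps(1) nc]) (use ps(5) in \<open>simp add: I_def\<close>)
  have IS: "I \<inter> set ps = Pair 0 ` {..<s} \<union> Pair 3 ` {..<t}"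
    unfolding ps(3) X' Y' by (auto simp: I_def)
  have "length (filter (\<lambda>x. x \<in> I) ps) = s + t"
    unfolding card_filter_distinct[OF ps(2)] IS by (subst card_pair2) auto
  moreover have "length ps = 2 * (s + t)"
  proof -
    have "length ps = card (set ps)" using distinct_card[OF ps(2)] by simp
    also have "\<dots> = card (M_X n s - W) + card (M_Y n t - W)"
      unfolding ps(3) by (rule card_Un_disjoint) (auto simp: X' Y')
    finally show ?thesis using cX cY by simp
  qed
  ultimately show False using A ps(4) by (simp add: I_def)
qed



lemma partI:
  assumes "1 \<le> s" "1 \<le> t" "max (s + p + 2) (t + p + 2) \<le> n" "n \<le> s + t + p + 1"
  shows "\<not> hamilton_biconnected_2p p (M_X n s) (M_Y (n - 1) t) M_E"
proof
  assume H: "hamilton_biconnected_2p p (M_X n s) (M_Y (n - 1) t) M_E"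
  have a1: "s + p + 2 \<le> n" "t + p + 2 \<le> n" using assms(3) by auto
  define W where "W = Pair (1::nat) ` {..<p} \<union> Pair (2::nat) ` {..<p}"
  have WX: "W \<inter> M_X n s = Pair 1 ` {..<p}" using a1 by (auto simp: W_def M_X_def)
  have WY: "W \<inter> M_Y (n - 1) t = Pair 2 ` {..<p}" using a1 by (auto simp: W_def M_Y_def)
  have "W \<subseteq> M_X n s \<union> M_Y (n - 1) t" using a1 by (auto simp: W_def M_X_def M_Y_def)
  moreover have "balanced_set (M_X n s) (M_Y (n - 1) t) W"
    unfolding balanced_set_def WX WY by (simp add: card_image inj_on_def)
  moreover have "card W = 2 * p" unfolding W_def by (subst card_pair2) auto
  ultimately have HB: "hamilton_biconnected (M_X n s - W) (M_Y (n - 1) t - W) M_E"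
    using H unfolding hamilton_biconnected_2p_def by blast
  have X': "M_X n s - W = Pair 0 ` {..<s} \<union> Pair 1 ` {p..<n-s}"
    using a1 by (auto simp: W_def M_X_def image_iff)
  have Y': "M_Y (n - 1) t - W = Pair 2 ` {p..<n-1-t} \<union> Pair 3 ` {..<t}"
    using a1 by (auto simp: W_def M_Y_def image_iff)
  have cX: "card (M_X n s - W) = n - p" unfolding X' using a1 by (subst card_pair2) auto
  have cY: "card (M_Y (n - 1) t - W) = n - 1 - p" unfolding Y' using a1 by (subst card_pair2) auto
  have u: "(1, p) \<in> M_X n s - W" unfolding X' using a1 by auto
  have v: "(1, Suc p) \<in> M_X n s - W" unfolding X' using a1 by auto
  have "ham_path ((M_X n s - W) \<union> (M_Y (n - 1) t - W)) M_E (1,p) (1, Suc p)"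
    using HB u v cX cY a1 unfolding hamilton_biconnected_def by auto
  then obtain ps where ps: "ps \<noteq> []" "distinct ps" "set ps = (M_X n s - W) \<union> (M_Y (n - 1) t - W)"
    "hd ps = (1,p)" "last ps = (1, Suc p)" "\<forall>i. Suc i < length ps \<longrightarrow> M_E (ps ! i) (ps ! Suc i)"
    unfolding ham_path_def by blast
  define I where "I = {a::nat\<times>nat. fst a = 0 \<or> fst a = 3}"
  have nc: "\<forall>k. Suc k < length ps \<longrightarrow> \<not> (ps!k \<in> I \<and> ps!Suc k \<in> I)"
    using ps(6) by (auto simp: I_def M_E_iff)
  have ex: "\<exists>k. Suc k < length ps \<and> ps!k \<notin> I \<and> ps!Suc k \<notin> I"
  proof (rule ccontr)
    assume nex: "\<not> ?thesis"
    have altI: "\<forall>k. Suc k < length ps \<longrightarrow> ((ps!k \<in> I) \<longleftrightarrow> \<not> (ps!Suc k \<in> I))"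
      using nc nex by blast
    have altQ: "\<forall>k. Suc k < length ps \<longrightarrow> ((fst (ps!k) \<le> 1) \<longleftrightarrow> \<not> (fst (ps!Suc k) \<le> 1))"
      using ps(6) by (auto simp: M_E_iff)
    have h0: "ps ! 0 = (1,p)" using ps(1,4) by (simp add: hd_conv_nth)
    have "(0, 0) \<in> set ps" unfolding ps(3) X' using assms(1) by auto
    then obtain j where j: "j < length ps" "ps ! j = (0,0)" by (auto simp: in_set_conv_nth)
    have "(ps!j \<in> I) \<longleftrightarrow> (ps!0 \<in> I \<longleftrightarrow> even j)" by (rule alt[OF altI j(1)])
    moreover have "(fst (ps!j) \<le> 1) \<longleftrightarrow> (fst (ps!0) \<le> 1 \<longleftrightarrow> even j)"
      by (rule alt[where P="\<lambda>a. fst a \<le> 1", OF altQ j(1)])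
    ultimately show False using j(2) h0 by (simp add: I_def)
  qed
  have B: "2 * length (filter (\<lambda>x. x \<in> I) ps) + (if hd ps \<in> I then 0 else 1) + 1 \<le> length ps"
    by (rule cnt_B[OF ps(1) nc _ ex]) (use ps(5) in \<open>simp add: I_def\<close>)
  have IS: "I \<inter> set ps = Pair 0 ` {..<s} \<union> Pair 3 ` {..<t}"
    unfolding ps(3) X' Y' by (auto simp: I_def)
  have "length (filter (\<lambda>x. x \<in> I) ps) = s + t"
    unfolding card_filter_distinct[OF ps(2)] IS by (subst card_pair2) auto
  moreover have "length ps = (n - p) + (n - 1 - p)"
  proof -
    have "length ps = card (set ps)" using distinct_card[OF ps(2)] by simp
    also have "\<dots> = card (M_X n s - W) + card (M_Y (n - 1) t - W)"
    proof -
      have d: "(M_X n s - W) \<inter> (M_Y (n - 1) t - W) = {}" unfolding X' Y' by auto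
      have f1: "finite (M_X n s - W)" unfolding X' by auto
      have f2: "finite (M_Y (n - 1) t - W)" unfolding Y' by auto
      show ?thesis unfolding ps(3) by (rule card_Un_disjoint[OF f1 f2 d])
    qed
    finally show ?thesis using cX cY by simp
  qed
  ultimately show False using B ps(4) assms(4) a1 by (simp add: I_def)
qed



lemma N_E_iff: "N_E a b \<longleftrightarrow>
   (fst a = 0 \<and> fst b = 3) \<or> (fst a = 3 \<and> fst b = 0) \<or>
   (fst a = 1 \<and> fst b = 4) \<or> (fst a = 4 \<and> fst b = 1) \<or>
   (fst a = 2 \<and> fst b = 5) \<or> (fst a = 5 \<and> fst b = 2) \<or>
   (fst a = 0 \<and> fst b = 4) \<or> (fst a = 4 \<and> fst b = 0) \<or>
   (fst a = 1 \<and> fst b = 3) \<or> (fst a = 3 \<and> fst b = 1) \<or>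
   (fst a = 1 \<and> fst b = 5) \<or> (fst a = 5 \<and> fst b = 1) \<or>
   (fst a = 2 \<and> fst b = 4) \<or> (fst a = 4 \<and> fst b = 2)"
  unfolding N_E_def by (auto simp: doubleton_eq_iff)

lemma partIII:
  assumes "p + 6 \<le> n"
  shows "\<not> hamilton_biconnected_2p p (N_X n p) (N_Y n p) N_E"
proof
  assume H: "hamilton_biconnected_2p p (N_X n p) (N_Y n p) N_E"
  define m where "m = n - p - 2"
  have m4: "4 \<le> m" using assms by (simp add: m_def)
  define W where "W = Pair (1::nat) ` {1..p} \<union> Pair (4::nat) ` {1..p}"
  have WX: "W \<inter> N_X n p = Pair 1 ` {1..p}" by (auto simp: W_def N_X_def)
  have WY: "W \<inter> N_Y n p = Pair 4 ` {1..p}" by (auto simp: W_def N_Y_def)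
  have "W \<subseteq> N_X n p \<union> N_Y n p" by (auto simp: W_def N_X_def N_Y_def)
  moreover have "balanced_set (N_X n p) (N_Y n p) W"
    unfolding balanced_set_def WX WY by (simp add: card_image inj_on_def)
  moreover have "card W = 2 * p" unfolding W_def by (subst card_pair2) auto
  ultimately have HB: "hamilton_biconnected (N_X n p - W) (N_Y n p - W) N_E"
    using H unfolding hamilton_biconnected_2p_def by blast
  have X': "N_X n p - W = insert (1,0) (insert (2,0) (Pair 0 ` {..<m}))"
    by (auto simp: W_def N_X_def m_def image_iff)
  have Y': "N_Y n p - W = insert (4,0) (insert (5,0) (Pair 3 ` {..<m}))"
    by (auto simp: W_def N_Y_def m_def image_iff)
  have cX: "card (N_X n p - W) = m + 2" unfolding X' by (simp add: card_image inj_on_def image_iff)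
  have cY: "card (N_Y n p - W) = m + 2" unfolding Y' by (simp add: card_image inj_on_def image_iff)
  have u: "(1, 0) \<in> N_X n p - W" unfolding X' by auto
  have v: "(4, 0) \<in> N_Y n p - W" unfolding Y' by auto
  have "ham_path ((N_X n p - W) \<union> (N_Y n p - W)) N_E (1,0) (4,0)"
    using HB u v cX cY unfolding hamilton_biconnected_def by auto
  then obtain ps where ps: "ps \<noteq> []" "distinct ps" "set ps = (N_X n p - W) \<union> (N_Y n p - W)"
    "hd ps = (1,0)" "last ps = (4,0)" "\<forall>i. Suc i < length ps \<longrightarrow> N_E (ps ! i) (ps ! Suc i)"
    unfolding ham_path_def by blast
  define N where "N = length ps"
  have len: "N = 2 * (m + 2)"
  proof -
    have "N = card (set ps)" using distinct_card[OF ps(2)] by (simp add: N_def)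
    also have "\<dots> = card (N_X n p - W) + card (N_Y n p - W)"
    proof -
      have d: "(N_X n p - W) \<inter> (N_Y n p - W) = {}" unfolding X' Y' by auto
      have f1: "finite (N_X n p - W)" unfolding X' by auto
      have f2: "finite (N_Y n p - W)" unfolding Y' by auto
      show ?thesis unfolding ps(3) by (rule card_Un_disjoint[OF f1 f2 d])
    qed
    finally show ?thesis using cX cY by simp
  qed
  have h0: "ps ! 0 = (1,0)" using ps(1,4) by (simp add: hd_conv_nth)
  have hN: "ps ! (N - 1) = (4,0)" using ps(1,5) by (simp add: last_conv_nth N_def)
  have c4: "a = (4,0)" if "a \<in> set ps" "fst a = 4" for a
    using that unfolding ps(3) X' Y' by auto
  have c5: "a = (5,0)" if "a \<in> set ps" "fst a = 5" for a
    using that unfolding ps(3) X' Y' by auto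
  have c1: "a = (1,0)" if "a \<in> set ps" "fst a = 1" for a
    using that unfolding ps(3) X' Y' by auto
  have c2: "a = (2,0)" if "a \<in> set ps" "fst a = 2" for a
    using that unfolding ps(3) X' Y' by auto
  have inj: "i = j" if "i < N" "j < N" "ps ! i = ps ! j" for i j
    using that ps(2) nth_eq_iff_index_eq N_def by blast
  have mem: "ps ! i \<in> set ps" if "i < N" for i using that N_def by simp
  have "(2, 0) \<in> set ps" unfolding ps(3) X' by auto
  then obtain j where j: "j < N" "ps ! j = (2,0)" by (auto simp: in_set_conv_nth N_def)
  have j0: "j \<noteq> 0" using j h0 by (metis Pair_inject numeral_eq_one_iff semiring_norm(85))
  have jN: "j \<noteq> N - 1" using j hN by auto
  obtain i where i: "j = Suc i" using j0 by (cases j) auto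
  have jl: "Suc j < N" using j jN by auto
  have e1: "N_E (ps ! i) (ps ! j)" using ps(6) i j by (auto simp: N_def)
  have e2: "N_E (ps ! j) (ps ! Suc j)" using ps(6) jl by (auto simp: N_def)
  have a1: "ps ! i = (4,0) \<or> ps ! i = (5,0)"
    using e1 j c4[OF mem] c5[OF mem] i jl by (auto simp: N_E_iff)
  have a2: "ps ! Suc j = (4,0) \<or> ps ! Suc j = (5,0)"
    using e2 j c4[OF mem[OF jl]] c5[OF mem[OF jl]] by (auto simp: N_E_iff)
  have "ps ! i \<noteq> ps ! Suc j" using inj[of i "Suc j"] i jl by auto
  moreover have "ps ! i \<noteq> (4,0)" using inj[of i "N - 1"] hN i jl by auto
  ultimately have b1: "ps ! i = (5,0)" and b2: "ps ! Suc j = (4,0)" using a1 a2 by auto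
  have jN2: "Suc j = N - 1" using inj[of "Suc j" "N - 1"] b2 hN jl by auto
  have i0: "i \<noteq> 0" proof assume "i = 0" then have "(5::nat,0::nat) = (1,0)" using b1 h0 by simp then show False by simp qed
  obtain i' where i': "i = Suc i'" using i0 by (cases i) auto
  have e3: "N_E (ps ! i') (ps ! i)" using ps(6) i' i jl by (auto simp: N_def)
  have il: "i' < N" using i' i jl by auto
  have a3: "ps ! i' = (1,0) \<or> ps ! i' = (2,0)"
    using e3 b1 c1[OF mem[OF il]] c2[OF mem[OF il]] by (auto simp: N_E_iff)
  have "ps ! i' \<noteq> (2,0)" using inj[of i' j] j i i' by auto
  then have "ps ! i' = (1,0)" using a3 by auto
  then have "i' = 0" using inj[of i' 0] h0 il by auto
  then show False using jN2 i i' len m4 by auto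
qed


theorem lemma2p8:
  shows "(\<forall>(p::nat) (s::nat) (t::nat) (n::nat).
            1 \<le> s \<and> 1 \<le> t \<and> max (s + p + 2) (t + p + 2) \<le> n \<and> n \<le> s + t + p + 1 \<longrightarrow>
            \<not> hamilton_biconnected_2p p (M_X n s) (M_Y (n - 1) t) M_E)
       \<and> (\<forall>(p::nat) (s::nat) (t::nat) (n::nat).
            1 \<le> s \<and> 1 \<le> t \<and> n = s + t + p \<longrightarrow>
            \<not> hamilton_biconnected_2p p (M_X n s) (M_Y n t) M_E)
       \<and> (\<forall>(p::nat) (n::nat). p + 6 \<le> n \<longrightarrow>
            \<not> hamilton_biconnected_2p p (N_X n p) (N_Y n p) N_E)"
  using partI partII partIII by blast

end
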